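(* Let $R$ be a unital associative ring and $$A=\begin{pmatrix}1&1&1\\1&a&b\\1&c&d\end{pmatrix}\in\widehat{\cal S},\quad \Phi(A)=\begin{pmatrix}1&1&1\\1&a'&b'\\1&c'&d'\end{pmatrix},\quad \Phi^{-1}(A)=\begin{pmatrix}1&1&1\\1&a^\circ&b^\circ\\1&c^\circ&d^\circ\end{pmatrix}.$$ Then $$a'=(d-1)^{-1}(d-c)a^{-1}(db^{-1}-ca^{-1})^{-1}(db^{-1}-1),\qquad a^\circ=(d-1)(d-c)^{-1}(db^{-1}-ca^{-1})(db^{-1}-1)^{-1}.$$
   Context: $R^*$: units of $R$. $M_3^*(R)$: invertible $3\times3$ matrices; $M_3^\star(R)$: matrices with all entries in $R^*$. $J_1(M)=M^{-1}$ on $M_3^*(R)$; $J_2(M)_{jk}=(M_{kj})^{-1}$ on $M_3^\star(R)$; $J=J_2\circ J_1$, $J^{-1}=J_1\circ J_2$. $\widehat M_3(R)$: matrices whose first row and column consist of $1$'s. For $A=\{a_{j,k}\}\in M_3^\star(R)$: $\Lambda^L(A)_{j,k}=a_{1,1}a_{j,1}^{-1}a_{j,k}a_{1,k}^{-1}$, $\Lambda^R(A)_{j,k}=a_{j,1}^{-1}a_{j,k}a_{1,k}^{-1}a_{1,1}$. $\Phi(A)=J_2(\Lambda^L(A^{-1}))$ and $\Phi^{-1}(A)=\Lambda^R(J^{-1}(A))$ (both defined on $\widehat{\cal S}$). ${\cal S}=\{M\in M_3(R):$ all square submatrices of $M$ are invertible and $J_2(M)$ is invertible$\}$, $\widehat{\cal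 S}={\cal S}\cap\widehat M_3(R)$. *)

theory Defs
  imports Main
begin

text \<open>Matrices over a unital associative (not necessarily commutative) ring are
represented as functions nat => nat => 'a; only the entries with indices
below the size n are meaningful. Indices are 0-based (paper index j is j-1 here).\<close>

definition is_unit :: "'a::ring_1 \<Rightarrow> bool" where
  "is_unit x \<longleftrightarrow> (\<exists>y. x * y = 1 \<and> y * x = 1)"

definition uinv :: "'a::ring_1 \<Rightarrow> 'a" where
  "uinv x = (THE y. x * y = 1 \<and> y * x = 1)"

definition mmult :: "nat \<Rightarrow> (nat \<Rightarrow> nat \<Rightarrow> 'a::ring_1) \<Rightarrow> (nat \<Rightarrow> nat \<Rightarrow> 'a) \<Rightarrow> nat \<Rightarrow> nat \<Rightarrow> 'a" where
  "mmult n A B = (\<lambda>i j. \<Sum>l<n. A i l * B l j)"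

definition is_minv :: "nat \<Rightarrow> (nat \<Rightarrow> nat \<Rightarrow> 'a::ring_1) \<Rightarrow> (nat \<Rightarrow> nat \<Rightarrow> 'a) \<Rightarrow> bool" where
  "is_minv n A B \<longleftrightarrow> (\<forall>i<n. \<forall>j<n. mmult n A B i j = (if i = j then 1 else 0)
                                 \<and> mmult n B A i j = (if i = j then 1 else 0))"

definition minvertible :: "nat \<Rightarrow> (nat \<Rightarrow> nat \<Rightarrow> 'a::ring_1) \<Rightarrow> bool" where
  "minvertible n A \<longleftrightarrow> (\<exists>B. is_minv n A B)"

text \<open>The inverse matrix (unique on indices below n); entries outside are set to 0.\<close>
definition minv :: "nat \<Rightarrow> (nat \<Rightarrow> nat \<Rightarrow> 'a::ring_1) \<Rightarrow> nat \<Rightarrow> nat \<Rightarrow> 'a" where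
  "minv n A = (THE B. is_minv n A B \<and> (\<forall>i j. \<not> (i < n \<and> j < n) \<longrightarrow> B i j = 0))"

definition submat :: "(nat \<Rightarrow> nat \<Rightarrow> 'a) \<Rightarrow> nat set \<Rightarrow> nat set \<Rightarrow> nat \<Rightarrow> nat \<Rightarrow> 'a" where
  "submat A I J = (\<lambda>i j. A (sorted_list_of_set I ! i) (sorted_list_of_set J ! j))"

definition all_sq_submats_invertible :: "(nat \<Rightarrow> nat \<Rightarrow> 'a::ring_1) \<Rightarrow> bool" where
  "all_sq_submats_invertible A \<longleftrightarrow>
     (\<forall>I J. I \<subseteq> {..<3} \<and> J \<subseteq> {..<3} \<and> I \<noteq> {} \<and> card I = card J
            \<longrightarrow> minvertible (card I) (submat A I J))"

definition J1 :: "(nat \<Rightarrow> nat \<Rightarrow> 'a::ring_1) \<Rightarrow> nat \<Rightarrow> nat \<Rightarrow> 'a" where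
  "J1 M = minv 3 M"

definition J2 :: "(nat \<Rightarrow> nat \<Rightarrow> 'a::ring_1) \<Rightarrow> nat \<Rightarrow> nat \<Rightarrow> 'a" where
  "J2 M = (\<lambda>j k. uinv (M k j))"

definition JJ :: "(nat \<Rightarrow> nat \<Rightarrow> 'a::ring_1) \<Rightarrow> nat \<Rightarrow> nat \<Rightarrow> 'a" where
  "JJ M = J2 (J1 M)"

definition JJinv :: "(nat \<Rightarrow> nat \<Rightarrow> 'a::ring_1) \<Rightarrow> nat \<Rightarrow> nat \<Rightarrow> 'a" where
  "JJinv M = J1 (J2 M)"

definition LambdaL :: "(nat \<Rightarrow> nat \<Rightarrow> 'a::ring_1) \<Rightarrow> nat \<Rightarrow> nat \<Rightarrow> 'a" where
  "LambdaL A = (\<lambda>j k. A 0 0 * uinv (A j 0) * A j k * uinv (A 0 k))"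

definition LambdaR :: "(nat \<Rightarrow> nat \<Rightarrow> 'a::ring_1) \<Rightarrow> nat \<Rightarrow> nat \<Rightarrow> 'a" where
  "LambdaR A = (\<lambda>j k. uinv (A j 0) * A j k * uinv (A 0 k) * A 0 0)"

definition Phi :: "(nat \<Rightarrow> nat \<Rightarrow> 'a::ring_1) \<Rightarrow> nat \<Rightarrow> nat \<Rightarrow> 'a" where
  "Phi A = J2 (LambdaL (minv 3 A))"

definition Phi_inv :: "(nat \<Rightarrow> nat \<Rightarrow> 'a::ring_1) \<Rightarrow> nat \<Rightarrow> nat \<Rightarrow> 'a" where
  "Phi_inv A = LambdaR (JJinv A)"

definition in_S :: "(nat \<Rightarrow> nat \<Rightarrow> 'a::ring_1) \<Rightarrow> bool" where
  "in_S M \<longleftrightarrow> all_sq_submats_invertible M \<and> minvertible 3 (J2 M)"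

definition in_hatM3 :: "(nat \<Rightarrow> nat \<Rightarrow> 'a::ring_1) \<Rightarrow> bool" where
  "in_hatM3 M \<longleftrightarrow> (\<forall>k<3. M 0 k = 1 \<and> M k 0 = 1)"

definition in_hatS :: "(nat \<Rightarrow> nat \<Rightarrow> 'a::ring_1) \<Rightarrow> bool" where
  "in_hatS M \<longleftrightarrow> in_S M \<and> in_hatM3 M"

definition mat3 :: "'a::zero \<Rightarrow> 'a \<Rightarrow> 'a \<Rightarrow> 'a \<Rightarrow> 'a \<Rightarrow> 'a \<Rightarrow> 'a \<Rightarrow> 'a \<Rightarrow> 'a \<Rightarrow> nat \<Rightarrow> nat \<Rightarrow> 'a" where
  "mat3 x00 x01 x02 x10 x11 x12 x20 x21 x22 = (\<lambda>i j.
     if i = 0 then (if j = 0 then x00 else if j = 1 then x01 else if j = 2 then x02 else 0)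
     else if i = 1 then (if j = 0 then x10 else if j = 1 then x11 else if j = 2 then x12 else 0)
     else if i = 2 then (if j = 0 then x20 else if j = 1 then x21 else if j = 2 then x22 else 0)
     else 0)"

end

theory Submission
  imports Defs
begin


lemma unit_uniq: fixes x::"'a::ring_1" assumes "x*y=1" "y*x=1" "x*z=1" "z*x=1" shows "y = z"
proof -
  have "y = y*(x*z)" using assms by simp
  also have "\<dots> = (y*x)*z" by (simp add: mult.assoc)
  finally show ?thesis using assms by simp
qed

lemma uinv_eq: fixes x::"'a::ring_1" assumes "x*y=1" "y*x=1" shows "uinv x = y"
  unfolding uinv_def by (rule the_equality) (use assms unit_uniq in blast)+

lemma unitD: fixes x::"'a::ring_1" assumes "is_unit x" shows "x * uinv x = 1" "uinv x * x = 1"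
  using assms uinv_eq unfolding is_unit_def by metis+

lemma unit_lr: fixes x::"'a::ring_1" assumes "x*q=1" "q'*x=1" shows "is_unit x"
proof -
  have "q' = q'*(x*q)" using assms by simp
  also have "\<dots> = (q'*x)*q" by (simp add: mult.assoc)
  also have "\<dots> = q" using assms by simp
  finally show ?thesis using assms unfolding is_unit_def by blast
qed

lemma sorted2: "(i1::nat) < i2 \<Longrightarrow> sorted_list_of_set {i1,i2} = [i1,i2]"
  by simp
lemma sum3: "(\<Sum>l<3::nat. f l) = f 0 + f 1 + (f 2::'a::comm_monoid_add)"
  by (simp add: eval_nat_numeral add.assoc)
lemma sum2: "(\<Sum>l<2::nat. f l) = f 0 + (f 1::'a::comm_monoid_add)"
  by (simp add: eval_nat_numeral)


lemma unit_mult: fixes x::"'a::ring_1" assumes "is_unit x" "is_unit y" shows "is_unit (x*y)" "uinv (x*y) = uinv y * uinv x"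
proof -
  have a: "x*y*(uinv y*uinv x) = 1" using unitD[OF assms(1)] unitD[OF assms(2)]
    by (simp add: mult.assoc) (metis mult.assoc mult_1_left)
  have b: "(uinv y*uinv x)*(x*y) = 1" using unitD[OF assms(1)] unitD[OF assms(2)]
    by (simp add: mult.assoc) (metis mult.assoc mult_1_left)
  show "is_unit (x*y)" using a b unfolding is_unit_def by blast
  show "uinv (x*y) = uinv y * uinv x" using a b by (rule uinv_eq)
qed

lemma unit_neg: fixes x::"'a::ring_1" assumes "is_unit x" shows "is_unit (-x)" "uinv (-x) = - uinv x"
proof -
  have a: "(-x)*(-uinv x) = 1" "(-uinv x)*(-x) = 1" using unitD[OF assms] by simp_all
  then show "is_unit (-x)" unfolding is_unit_def by blast
  show "uinv (-x) = - uinv x" using a by (rule uinv_eq)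
qed

lemma unit_uinv: fixes x::"'a::ring_1" assumes "is_unit x" shows "is_unit (uinv x)" "uinv (uinv x) = x"
  using unitD[OF assms] uinv_eq unfolding is_unit_def by metis+

lemma unit_one: "is_unit (1::'a::ring_1)" "uinv (1::'a) = 1"
  using uinv_eq[of "1::'a" 1] unfolding is_unit_def by auto

lemma cancel: fixes x::"'a::ring_1" assumes "is_unit u" shows "u * (uinv u * x) = x" "uinv u * (u * x) = x"
  "x * u * uinv u = x" "x * uinv u * u = x"
  using unitD[OF assms] by (simp_all add: mult.assoc[symmetric]) (simp_all add: mult.assoc)

lemma entry_unit:
  fixes x::"'a::ring_1"
  assumes r0: "x*p0 + x1*q0 + x2*r0 = 1" and r1: "x*p1 + x1*q1 + x2*r1 = 0" and r2: "x*p2 + x1*q2 + x2*r2 = 0"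
   and c0: "p0*x + p1*y1 + p2*y2 = 1" and c1: "q0*x + q1*y1 + q2*y2 = 0" and c2: "r0*x + r1*y1 + r2*y2 = 0"
   and uq: "is_unit q1" and uS: "is_unit (r2 - r1*uinv q1*q2)"
  shows "is_unit x"
proof -
  define u where "u = uinv q1"
  define S where "S = r2 - r1*u*q2"
  define v where "v = uinv S"
  define Q where "Q = (p0 - p1*u*q0) - (p2 - p1*u*q2)*v*(r0 - r1*u*q0)"
  have U: "q1*u = 1" "u*q1 = 1" using unitD[OF uq] u_def by auto
  have V: "S*v = 1" "v*S = 1" using unitD[OF uS] u_def S_def v_def by auto
  have x1: "x1 = -(x*p1 + x2*r1)*u"
  proof -
    have "x1*q1 = -(x*p1 + x2*r1)" using r1 by (simp add: eq_neg_iff_add_eq_0 algebra_simps)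
    hence "x1*q1*u = -(x*p1 + x2*r1)*u" by simp
    thus ?thesis using U by (simp add: mult.assoc)
  qed
  have "x*(p2 - p1*u*q2) + x2*S = 0" using r2 unfolding x1 S_def by (simp add: algebra_simps)
  hence "x2*S = -(x*(p2 - p1*u*q2))" by (simp add: eq_neg_iff_add_eq_0 algebra_simps)
  hence "x2*S*v = -(x*(p2 - p1*u*q2))*v" by simp
  hence x2: "x2 = -(x*(p2 - p1*u*q2))*v" using V by (simp add: mult.assoc)
  have "x*(p0 - p1*u*q0) + x2*(r0 - r1*u*q0) = 1" using r0 unfolding x1 by (simp add: algebra_simps)
  hence R: "x*Q = 1" unfolding x2 Q_def by (simp add: algebra_simps)
  have y1: "y1 = u*(-(q0*x + q2*y2))"
  proof -
    have "q1*y1 = -(q0*x + q2*y2)" using c1 by (simp add: eq_neg_iff_add_eq_0 algebra_simps)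
    hence "u*(q1*y1) = u*(-(q0*x + q2*y2))" by simp
    moreover have "u*(q1*y1) = (u*q1)*y1" by (simp add: mult.assoc)
    ultimately show ?thesis using U by simp
  qed
  have "(r0 - r1*u*q0)*x + S*y2 = 0" using c2 unfolding y1 S_def by (simp add: algebra_simps)
  hence "S*y2 = -((r0 - r1*u*q0)*x)" by (simp add: eq_neg_iff_add_eq_0 algebra_simps)
  hence "v*(S*y2) = v*(-((r0 - r1*u*q0)*x))" by simp
  hence y2: "y2 = -v*((r0 - r1*u*q0)*x)" using V by (simp add: mult.assoc[symmetric])
  have "(p0 - p1*u*q0)*x + (p2 - p1*u*q2)*y2 = 1" using c0 unfolding y1 by (simp add: algebra_simps)
  hence L: "Q*x = 1" unfolding y2 Q_def by (simp add: algebra_simps)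
  show ?thesis using R L by (rule unit_lr)
qed


lemma minv_unique:
  fixes A B C :: "nat \<Rightarrow> nat \<Rightarrow> 'a::ring_1"
  assumes B: "is_minv n A B" and C: "is_minv n A C" and i: "i<n" and j: "j<n"
  shows "B i j = C i j"
proof -
  have "(\<Sum>k<n. B i k * (if k = j then 1 else 0)) = (\<Sum>k<n. if k = j then B i k else 0)"
    by (intro sum.cong) auto
  hence "B i j = (\<Sum>k<n. B i k * (if k = j then 1 else 0))" using j by simp
  also have "\<dots> = (\<Sum>k<n. B i k * mmult n A C k j)"
    using C j by (intro sum.cong) (auto simp: is_minv_def)
  also have "\<dots> = (\<Sum>k<n. \<Sum>l<n. B i k * A k l * C l j)"
    by (simp add: mmult_def sum_distrib_left mult.assoc)
  also have "\<dots> = (\<Sum>l<n. \<Sum>k<n. B i k * A k l * C l j)" by (rule sum.swap)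
  also have "\<dots> = (\<Sum>l<n. mmult n B A i l * C l j)"
    by (simp add: mmult_def sum_distrib_right)
  also have "\<dots> = (\<Sum>l<n. (if i = l then 1 else 0) * C l j)"
    using B i by (intro sum.cong) (auto simp: is_minv_def)
  also have "\<dots> = (\<Sum>l<n. if i = l then C l j else 0)"
    by (intro sum.cong) auto
  also have "\<dots> = C i j" using i by simp
  finally show ?thesis .
qed

lemma minv_is:
  fixes A :: "nat \<Rightarrow> nat \<Rightarrow> 'a::ring_1"
  assumes "minvertible n A" shows "is_minv n A (minv n A)"
proof -
  obtain B where B: "is_minv n A B" using assms unfolding minvertible_def by blast
  define B' where "B' = (\<lambda>i j. if i < n \<and> j < n then B i j else (0::'a))"
  have mm: "mmult n A B' i j = mmult n A B i j" "mmult n B' A i j = mmult n B A i j" if "i<n" "j<n" for i j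
    using that unfolding mmult_def B'_def by (auto intro!: sum.cong)
  have B': "is_minv n A B'" using B mm unfolding is_minv_def by simp
  have ex: "is_minv n A B' \<and> (\<forall>i j. \<not> (i < n \<and> j < n) \<longrightarrow> B' i j = 0)" using B' B'_def by simp
  have "is_minv n A (minv n A) \<and> (\<forall>i j. \<not> (i < n \<and> j < n) \<longrightarrow> minv n A i j = 0)"
    unfolding minv_def
  proof (rule theI[of _ B'])
    show "is_minv n A B' \<and> (\<forall>i j. \<not> (i < n \<and> j < n) \<longrightarrow> B' i j = 0)" by (rule ex)
  next
    fix C assume C: "is_minv n A C \<and> (\<forall>i j. \<not> (i < n \<and> j < n) \<longrightarrow> C i j = 0)"
    show "C = B'"
    proof (intro ext)
      fix i j show "C i j = B' i j"
        using C ex minv_unique[of n A C B' i j] by (cases "i<n \<and> j<n") auto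
    qed
  qed
  thus ?thesis by simp
qed

lemma minv3_eqs:
  fixes A B :: "nat \<Rightarrow> nat \<Rightarrow> 'a::ring_1"
  assumes "is_minv 3 A B" "i<3" "j<3"
  shows "A i 0 * B 0 j + A i 1 * B 1 j + A i 2 * B 2 j = (if i = j then 1 else 0)"
        "B i 0 * A 0 j + B i 1 * A 1 j + B i 2 * A 2 j = (if i = j then 1 else 0)"
  using assms unfolding is_minv_def mmult_def by (simp_all add: sum3)

lemma entry1:
  fixes M :: "nat \<Rightarrow> nat \<Rightarrow> 'a::ring_1"
  assumes "all_sq_submats_invertible M" "i<3" "j<3"
  shows "is_unit (M i j)"
proof -
  have "minvertible (card {i}) (submat M {i} {j})"
    using assms(1)[unfolded all_sq_submats_invertible_def, rule_format, of "{i}" "{j}"] assms by auto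
  then obtain N where N: "is_minv 1 (submat M {i} {j}) N" unfolding minvertible_def by auto
  hence "M i j * N 0 0 = 1" "N 0 0 * M i j = 1" unfolding is_minv_def mmult_def submat_def by auto
  thus ?thesis unfolding is_unit_def by blast
qed

lemma schur2:
  fixes M :: "nat \<Rightarrow> nat \<Rightarrow> 'a::ring_1"
  assumes "all_sq_submats_invertible M" "i1<i2" "i2<3" "j1<j2" "j2<3" "is_unit (M i1 j1)"
  shows "is_unit (M i2 j2 - M i2 j1 * uinv (M i1 j1) * M i1 j2)"
proof -
  have "minvertible (card {i1,i2}) (submat M {i1,i2} {j1,j2})"
    using assms(1)[unfolded all_sq_submats_invertible_def, rule_format, of "{i1,i2}" "{j1,j2}"] assms by auto
  hence "minvertible 2 (submat M {i1,i2} {j1,j2})" using assms by (simp add: numeral_2_eq_2)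
  then obtain N where N: "is_minv 2 (submat M {i1,i2} {j1,j2}) N" unfolding minvertible_def by auto
  define m11 where "m11 = M i1 j1"
  define m12 where "m12 = M i1 j2"
  define m21 where "m21 = M i2 j1"
  define m22 where "m22 = M i2 j2"
  have N2: "mmult 2 (submat M {i1,i2} {j1,j2}) N 0 1 = 0" "mmult 2 (submat M {i1,i2} {j1,j2}) N 1 1 = 1"
    "mmult 2 N (submat M {i1,i2} {j1,j2}) 1 0 = 0" "mmult 2 N (submat M {i1,i2} {j1,j2}) 1 1 = 1"
    using N unfolding is_minv_def by auto
  have e: "m11 * N 0 1 + m12 * N 1 1 = 0" "m21 * N 0 1 + m22 * N 1 1 = 1"
     "N 1 0 * m11 + N 1 1 * m21 = 0" "N 1 0 * m12 + N 1 1 * m22 = 1"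
    using N2 assms(2,4) unfolding mmult_def submat_def m11_def m12_def m21_def m22_def
    by (simp_all add: sum2 sorted2)
  have U: "m11 * uinv m11 = 1" "uinv m11 * m11 = 1" using unitD[OF assms(6)] m11_def by auto
  have a: "m12 * N 1 1 = - (m11 * N 0 1)" "N 1 0 * m11 = - (N 1 1 * m21)" using e
    by (simp_all add: eq_neg_iff_add_eq_0 add.commute)
  have "(m22 - m21 * uinv m11 * m12) * N 1 1 = m22 * N 1 1 - m21 * (uinv m11 * (m12 * N 1 1))"
    by (simp add: algebra_simps)
  also have "\<dots> = m22 * N 1 1 + m21 * ((uinv m11 * m11) * N 0 1)" unfolding a by (simp add: mult.assoc)
  also have "\<dots> = 1" using U e by (simp add: add.commute)
  finally have R: "(m22 - m21 * uinv m11 * m12) * N 1 1 = 1" .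
  have "N 1 1 * (m22 - m21 * uinv m11 * m12) = N 1 1 * m22 - ((N 1 1 * m21) * uinv m11) * m12"
    by (simp add: algebra_simps)
  also have "\<dots> = N 1 1 * m22 + N 1 0 * m11 * uinv m11 * m12"
    using a(2) by simp
  also have "\<dots> = N 1 1 * m22 + N 1 0 * (m11 * uinv m11) * m12"
    by (simp add: mult.assoc)
  also have "\<dots> = 1" using U e by (simp add: add.commute)
  finally have L: "N 1 1 * (m22 - m21 * uinv m11 * m12) = 1" .
  show ?thesis using R L unit_lr m11_def m12_def m21_def m22_def by metis
qed


lemma lmul_cancel: fixes x::"'a::ring_1" assumes "is_unit u" "u*x = y" shows "x = uinv u * y"
  using assms cancel(2)[OF assms(1), of x] by simp
lemma rmul_cancel: fixes x::"'a::ring_1" assumes "is_unit u" "x*u = y" shows "x = y * uinv u"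
  using assms cancel(3)[OF assms(1), of x] by (simp add: mult.assoc)

lemma phi_alg:
  fixes a b c d x0 x1 y0 y1 z0 z1 :: "'a::ring_1"
  assumes ua: "is_unit a" and ub: "is_unit b" and ud1: "is_unit (d-1)" and udc: "is_unit (d-c)"
    and udb: "is_unit (d-b)" and uK: "is_unit (d - c*uinv a*b)"
    and e1: "x1 + y1 + z1 = 0" and e2: "x1 + c*y1 + d*z1 = 0"
    and e3: "x0 + a*y0 + b*z0 = 0" and e4: "x0 + c*y0 + d*z0 = 0"
    and ux0: "is_unit x0" and uy1: "is_unit y1"
  shows "uinv (x0 * uinv y0 * y1 * uinv x1) =
     uinv (d - 1) * (d - c) * uinv a * uinv (d * uinv b - c * uinv a) * (d * uinv b - 1)"
proof -
  note Ca = cancel[OF ua] unitD[OF ua] and Cb = cancel[OF ub] unitD[OF ub]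
  have z1: "z1 = -x1 - y1" using e1 by (simp add: algebra_simps eq_neg_iff_add_eq_0 add.assoc)
  have "(d-1)*x1 = (c-d)*y1" using e2 unfolding z1 by (simp add: algebra_simps)
  from lmul_cancel[OF ud1 this] have x1: "x1 = uinv (d-1)*(c-d)*y1" by (simp add: mult.assoc)
  define R where "R = uinv (d-1)*(c-d)"
  have ucd: "is_unit (c-d)" using unit_neg(1)[OF udc] by simp
  have uR: "is_unit R" unfolding R_def by (rule unit_mult(1)[OF unit_uinv(1)[OF ud1] ucd])
  have x1R: "x1 = R*y1" using x1 R_def by simp
  have ux1: "is_unit x1" unfolding x1R by (rule unit_mult(1)[OF uR uy1])
  have x1y1: "x1 * uinv y1 = R" unfolding x1R using cancel(3)[OF uy1] by simp
  have "b*z0 = -(x0 + a*y0)" using e3 by (simp add: algebra_simps eq_neg_iff_add_eq_0)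
  from lmul_cancel[OF ub this] have z0: "z0 = uinv b * (-(x0 + a*y0))" by simp
  define T where "T = c - d*uinv b*a"
  define W where "W = d*uinv b - 1"
  have Ty: "T*y0 = W*x0" using e4 unfolding z0 T_def W_def by (simp add: algebra_simps)
  define K where "K = d - c*uinv a*b"
  have TK: "T = -(K*uinv b*a)" unfolding T_def K_def by (simp add: algebra_simps Ca Cb)
  have uT: "is_unit T" unfolding TK
    by (intro unit_neg(1) unit_mult(1) ub ua unit_uinv(1)) (use uK K_def in simp_all)
  have WW: "W = (d-b)*uinv b" unfolding W_def by (simp add: algebra_simps Cb)
  have uW: "is_unit W" unfolding WW by (intro unit_mult(1) udb unit_uinv(1) ub)
  have y0: "y0 = uinv T * W * x0" using lmul_cancel[OF uT Ty] by (simp add: mult.assoc)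
  have uy0: "is_unit y0" unfolding y0 by (intro unit_mult(1) unit_uinv(1) uT uW ux0)
  have y0x0: "y0 * uinv x0 = uinv T * W" unfolding y0 using cancel(3)[OF ux0] by (simp add: mult.assoc)
  have "uinv (x0 * uinv y0 * y1 * uinv x1) = x1 * uinv y1 * y0 * uinv x0"
    using ux0 uy0 uy1 ux1
    by (simp add: unit_mult unit_uinv mult.assoc)
  also have "\<dots> = R * (uinv T * W)" using x1y1 y0x0 by (simp add: mult.assoc)
  finally have L: "uinv (x0 * uinv y0 * y1 * uinv x1) = R * (uinv T * W)" .
  define V where "V = d * uinv b - c * uinv a"
  have VT: "V = -T * uinv a" unfolding V_def T_def by (simp add: algebra_simps Ca Cb)
  have "uinv a * uinv V = uinv (V * a)"
    unfolding VT by (simp add: unit_mult unit_neg unit_uinv ua uT)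
  also have "V * a = -T" unfolding VT by (simp add: mult.assoc Ca)
  finally have aV: "uinv a * uinv V = - uinv T" using unit_neg(2)[OF uT] by simp
  have "uinv (d - 1) * (d - c) * uinv a * uinv V * W = uinv (d - 1) * (d - c) * (uinv a * uinv V) * W"
    by (simp add: mult.assoc)
  also have "\<dots> = R * (uinv T * W)" unfolding aV R_def by (simp add: algebra_simps)
  finally show ?thesis using L V_def W_def by simp
qed


lemma phiinv_alg:
  fixes a b c d x0 x1 x2 y0 y1 y2 :: "'a::ring_1"
  assumes ua: "is_unit a" and ub: "is_unit b" and uc: "is_unit c" and ud: "is_unit d"
    and udc: "is_unit (d-c)" and udb: "is_unit (d-b)"
    and e1: "y0 + y1 + y2 = 0" and e2: "y0 + y1*uinv c + y2*uinv d = 0"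
    and e3: "x0 + x1*uinv a + x2*uinv b = 0" and e4: "x0 + x1*uinv c + x2*uinv d = 0"
    and uy0: "is_unit y0" and ux1: "is_unit x1"
  shows "uinv y0 * y1 * uinv x1 * x0 =
     (d - 1) * uinv (d - c) * (d * uinv b - c * uinv a) * uinv (d * uinv b - 1)"
proof -
  note Cc = cancel[OF uc] unitD[OF uc] and Cb = cancel[OF ub] unitD[OF ub] and Cd = cancel[OF ud] unitD[OF ud]
  have y2: "y2 = -y0 - y1" using e1 by (simp add: algebra_simps eq_neg_iff_add_eq_0 add.assoc)
  define E where "E = uinv d - uinv c"
  have yE: "y0*(1 - uinv d) = y1*E" using e2 unfolding y2 E_def by (simp add: algebra_simps)
  have EE: "E = uinv c * (c - d) * uinv d" unfolding E_def by (simp add: algebra_simps Cc Cd)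
  have ucd: "is_unit (c-d)" using unit_neg(1)[OF udc] by simp
  have uE: "is_unit E" unfolding EE by (intro unit_mult(1) unit_uinv(1) uc ud ucd)
  have iE: "uinv E = d * uinv (c - d) * c" unfolding EE
    by (simp add: unit_mult unit_uinv uc ud ucd mult.assoc)
  have s0: "uinv y0 * y1 = (1 - uinv d) * uinv E"
  proof -
    have "uinv y0 * (y0*(1 - uinv d)) * uinv E = uinv y0 * (y1*E) * uinv E" using yE by simp
    thus ?thesis using cancel[OF uy0] cancel[OF uE] by (simp add: mult.assoc)
  qed
  have s: "uinv y0 * y1 = -((d - 1) * uinv (d - c) * c)"
  proof -
    have "(1 - uinv d) * uinv E = (1 - uinv d) * d * uinv (c - d) * c" unfolding iE by (simp add: mult.assoc)
    also have "(1 - uinv d) * d = d - 1" by (simp add: algebra_simps Cd)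
    finally show ?thesis using s0 unit_neg(2)[OF udc] by simp
  qed
  define F where "F = uinv b - uinv d"
  have "x1*(uinv a - uinv c) + x2*F = 0"
  proof -
    have "(x0 + x1*uinv a + x2*uinv b) - (x0 + x1*uinv c + x2*uinv d) = 0" using e3 e4 by simp
    thus ?thesis unfolding F_def by (simp add: algebra_simps)
  qed
  hence "x2*F = -(x1*(uinv a - uinv c))" by (simp add: algebra_simps eq_neg_iff_add_eq_0)
  have FF: "F = uinv b * (d - b) * uinv d" unfolding F_def by (simp add: algebra_simps Cb Cd)
  have uF: "is_unit F" unfolding FF by (intro unit_mult(1) unit_uinv(1) ub ud udb)
  have x2: "x2 = -(x1*(uinv a - uinv c)) * uinv F" by (rule rmul_cancel[OF uF]) fact
  have "x0 = -(x1*uinv c) - x2*uinv d" using e4 by (simp add: algebra_simps eq_neg_iff_add_eq_0)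
  hence x0: "x0 = x1 * (-uinv c + (uinv a - uinv c) * uinv F * uinv d)" unfolding x2 by (simp add: algebra_simps)
  define u where "u = -uinv c + (uinv a - uinv c) * uinv F * uinv d"
  have xu: "uinv x1 * x0 = u" unfolding x0 u_def using cancel(2)[OF ux1] by simp
  define G where "G = d * uinv b - 1"
  have GF: "G = d * F" unfolding G_def F_def by (simp add: algebra_simps Cd)
  have uG: "is_unit G" unfolding GF by (intro unit_mult(1) ud uF)
  have iG: "uinv F * uinv d = uinv G" unfolding GF by (simp add: unit_mult ud uF)
  have cu: "c * u = (c * uinv a - d * uinv b) * uinv G"
  proof -
    have "c * u = -1 + (c*uinv a - 1) * uinv G" unfolding u_def iG[symmetric] by (simp add: algebra_simps Cc)
    also have "\<dots> = -(G * uinv G) + (c*uinv a - 1) * uinv G" using unitD[OF uG] by simp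
    also have "\<dots> = (c * uinv a - d * uinv b) * uinv G" unfolding G_def by (simp add: algebra_simps)
    finally show ?thesis .
  qed
  have "uinv y0 * y1 * uinv x1 * x0 = (uinv y0 * y1) * (uinv x1 * x0)" by (simp add: mult.assoc)
  also have "\<dots> = -((d - 1) * uinv (d - c) * (c * u))" unfolding s xu by (simp add: mult.assoc)
  also have "\<dots> = (d - 1) * uinv (d - c) * (d * uinv b - c * uinv a) * uinv G" unfolding cu by (simp add: algebra_simps)
  finally show ?thesis unfolding G_def .
qed


lemma minvertible_cong:
  fixes M M' :: "nat \<Rightarrow> nat \<Rightarrow> 'a::ring_1"
  assumes "minvertible n M" "\<And>i j. i<n \<Longrightarrow> j<n \<Longrightarrow> M i j = M' i j"
  shows "minvertible n M'"
proof -
  obtain B where B: "is_minv n M B" using assms unfolding minvertible_def by auto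
  have "mmult n M B i j = mmult n M' B i j" "mmult n B M i j = mmult n B M' i j" if "i<n" "j<n" for i j
    using that assms(2) unfolding mmult_def by (auto intro!: sum.cong)
  hence "is_minv n M' B" using B unfolding is_minv_def by simp
  thus ?thesis unfolding minvertible_def by blast
qed

lemma unit_invdiff: fixes x y :: "'a::ring_1" assumes "is_unit x" "is_unit y" "is_unit (y - x)"
  shows "is_unit (uinv x - uinv y)"
proof -
  have "uinv x - uinv y = uinv x * (y - x) * uinv y"
    by (simp add: algebra_simps cancel[OF assms(1)] cancel[OF assms(2)] unitD[OF assms(1)] unitD[OF assms(2)])
  thus ?thesis by (simp add: unit_mult unit_uinv assms)
qed

theorem lemma9:
  fixes a b c d :: "'a::ring_1"
  assumes "in_hatS (mat3 1 1 1 1 a b 1 c d)"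
  shows "Phi (mat3 1 1 1 1 a b 1 c d) 1 1 =
           uinv (d - 1) * (d - c) * uinv a * uinv (d * uinv b - c * uinv a) * (d * uinv b - 1)
         \<and> Phi_inv (mat3 1 1 1 1 a b 1 c d) 1 1 =
           (d - 1) * uinv (d - c) * (d * uinv b - c * uinv a) * uinv (d * uinv b - 1)"
proof -
  define A where "A = mat3 1 1 1 1 a b 1 c d"
  have hS: "all_sq_submats_invertible A" and hJ: "minvertible 3 (J2 A)"
    using assms unfolding in_hatS_def in_S_def A_def by auto
  have Ae: "A 0 0 = 1" "A 0 1 = 1" "A 0 2 = 1" "A 1 0 = 1" "A 1 1 = a" "A 1 2 = b"
     "A 2 0 = 1" "A 2 1 = c" "A 2 2 = d" unfolding A_def mat3_def by simp_all
  note Ae = Ae Ae[unfolded One_nat_def]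
  have ua: "is_unit a" and ub: "is_unit b" and uc: "is_unit c" and ud: "is_unit d"
    using entry1[OF hS, of 1 1] entry1[OF hS, of 1 2] entry1[OF hS, of 2 1] entry1[OF hS, of 2 2]
    by (simp_all add: Ae)
  have uK: "is_unit (d - c * uinv a * b)" using schur2[OF hS, of 1 2 1 2] by (simp add: Ae ua)
  have ud1: "is_unit (d - 1)" using schur2[OF hS, of 0 2 0 2] by (simp add: Ae unit_one)
  have udc: "is_unit (d - c)" using schur2[OF hS, of 0 2 1 2] by (simp add: Ae unit_one)
  have udb: "is_unit (d - b)" using schur2[OF hS, of 1 2 0 2] by (simp add: Ae unit_one)
  have "minvertible 3 (submat A {..<3} {..<3})"
    using hS[unfolded all_sq_submats_invertible_def, rule_format, of "{..<3}" "{..<3}"] by (auto simp: lessThan_empty_iff)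
  hence mA: "minvertible 3 A"
  proof (rule minvertible_cong)
    fix i j :: nat assume "i<3" "j<3"
    moreover have "sorted_list_of_set {..<3::nat} = [0..<3]" by (simp add: lessThan_atLeast0)
    ultimately show "submat A {..<3} {..<3} i j = A i j" unfolding submat_def by simp
  qed
  define B where "B = minv 3 A"
  have hB: "is_minv 3 A B" unfolding B_def by (rule minv_is[OF mA])
  note CB = minv3_eqs(1)[OF hB] and RB = minv3_eqs(2)[OF hB]
  have ux0: "is_unit (B 0 0)"
    apply (rule entry_unit[where ?x1.0="B 0 1" and ?x2.0="B 0 2" and ?y1.0="B 1 0" and ?y2.0="B 2 0" and
          ?p0.0=1 and ?p1.0=1 and ?p2.0=1 and ?q0.0=1 and ?q1.0=a and ?q2.0=b and ?r0.0=1 and ?r1.0=c and ?r2.0=d])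
    using RB[of 0 0] RB[of 0 1] RB[of 0 2] CB[of 0 0] CB[of 1 0] CB[of 2 0] ua uK
    by (simp_all add: Ae)
  have uy1: "is_unit (B 1 1)"
    apply (rule entry_unit[where ?x1.0="B 1 0" and ?x2.0="B 1 2" and ?y1.0="B 0 1" and ?y2.0="B 2 1" and
          ?p0.0=a and ?p1.0=1 and ?p2.0=b and ?q0.0=1 and ?q1.0=1 and ?q2.0=1 and ?r0.0=c and ?r1.0=1 and ?r2.0=d])
    using RB[of 1 1] RB[of 1 0] RB[of 1 2] CB[of 1 1] CB[of 0 1] CB[of 2 1] ud1
    by (simp_all add: Ae ac_simps unit_one)
  have P1: "Phi A 1 1 =
     uinv (d - 1) * (d - c) * uinv a * uinv (d * uinv b - c * uinv a) * (d * uinv b - 1)"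
    unfolding Phi_def J2_def LambdaL_def B_def[symmetric]
    apply (rule phi_alg[OF ua ub ud1 udc udb uK _ _ _ _ ux0 uy1, where ?z1.0 = "B 2 1" and ?z0.0 = "B 2 0"])
    using CB[of 0 1] CB[of 2 1] CB[of 1 0] CB[of 2 0] by (simp_all add: Ae)
  define C where "C = J2 A"
  have Ce: "C 0 0 = 1" "C 0 1 = 1" "C 0 2 = 1" "C 1 0 = 1" "C 1 1 = uinv a" "C 1 2 = uinv c"
     "C 2 0 = 1" "C 2 1 = uinv b" "C 2 2 = uinv d" unfolding C_def J2_def by (simp_all add: Ae unit_one)
  note Ce = Ce Ce[unfolded One_nat_def]
  define D where "D = minv 3 C"
  have hD: "is_minv 3 C D" unfolding D_def C_def by (rule minv_is[OF hJ])
  note CD = minv3_eqs(1)[OF hD] and RD = minv3_eqs(2)[OF hD]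
  have ucd: "is_unit (c - d)" using unit_neg(1)[OF udc] by simp
  have ubd: "is_unit (b - d)" using unit_neg(1)[OF udb] by simp
  have udc': "is_unit (uinv d - uinv c)" by (rule unit_invdiff[OF ud uc ucd])
  have udb': "is_unit (uinv d - uinv b)" by (rule unit_invdiff[OF ud ub ubd])
  have uy0: "is_unit (D 1 0)"
    apply (rule entry_unit[where ?x1.0="D 1 1" and ?x2.0="D 1 2" and ?y1.0="D 0 0" and ?y2.0="D 2 0" and
          ?p0.0=1 and ?p1.0=1 and ?p2.0=1 and ?q0.0="uinv a" and ?q1.0=1 and ?q2.0="uinv c" and ?r0.0="uinv b" and ?r1.0=1 and ?r2.0="uinv d"])
    using RD[of 1 1] RD[of 1 0] RD[of 1 2] CD[of 0 0] CD[of 1 0] CD[of 2 0] udc'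
    by (simp_all add: Ce ac_simps unit_one)
  have ux1: "is_unit (D 0 1)"
    apply (rule entry_unit[where ?x1.0="D 0 0" and ?x2.0="D 0 2" and ?y1.0="D 1 1" and ?y2.0="D 2 1" and
          ?p0.0=1 and ?p1.0="uinv a" and ?p2.0="uinv c" and ?q0.0=1 and ?q1.0=1 and ?q2.0=1 and ?r0.0=1 and ?r1.0="uinv b" and ?r2.0="uinv d"])
    using RD[of 0 0] RD[of 0 1] RD[of 0 2] CD[of 1 1] CD[of 0 1] CD[of 2 1] udb'
    by (simp_all add: Ce ac_simps unit_one)
  have P2: "Phi_inv A 1 1 =
     (d - 1) * uinv (d - c) * (d * uinv b - c * uinv a) * uinv (d * uinv b - 1)"
    unfolding Phi_inv_def LambdaR_def JJinv_def J1_def C_def[symmetric] D_def[symmetric]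
    apply (rule phiinv_alg[OF ua ub uc ud udc udb _ _ _ _ uy0 ux1, where ?y2.0 = "D 1 2" and ?x2.0 = "D 0 2"])
    using RD[of 1 0] RD[of 1 2] RD[of 0 1] RD[of 0 2] by (simp_all add: Ce)
  show ?thesis using P1 P2 unfolding A_def by simp
qed

end
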